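(* Let $n\ge 2$. The graph $D_n$ is complete if and only if every prime $p\le \frac n2$ satisfies both $p\mid n$ and $p^{\acute v_p(n)}>\frac n2$.
   Context: $D_n$ is the graph with vertex set $\{1,\dots,n\}$ in which distinct $a,b$ are adjacent iff $\gcd(a,b)\mid n$ (the maximal Diophantine graph of order $n$). For a prime $p$, $\acute v_p(n):=v_p(n)+1$, where $v_p(n)$ is the exponent of $p$ in $n$. *)

theory Defs
  imports Complex_Main "HOL-Computational_Algebra.Primes"
begin

definition diophantine_adj :: "nat \<Rightarrow> nat \<Rightarrow> nat \<Rightarrow> bool" where
  "diophantine_adj n a b \<longleftrightarrow> a \<in> {1..n} \<and> b \<in> {1..n} \<and> a \<noteq> b \<and> gcd a b dvd n"

definition D_complete :: "nat \<Rightarrow> bool" where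
  "D_complete n \<longleftrightarrow> (\<forall>a\<in>{1..n}. \<forall>b\<in>{1..n}. a \<noteq> b \<longrightarrow> diophantine_adj n a b)"

definition vacute :: "nat \<Rightarrow> nat \<Rightarrow> nat" where
  "vacute p n = multiplicity p n + 1"

end

theory Submission
  imports Defs
begin

lemma gcd_double_le:
  fixes a b n :: nat
  assumes "a \<in> {1..n}" "b \<in> {1..n}" "a \<noteq> b"
  shows "2 * gcd a b \<le> n"
proof -
  let ?d = "gcd a b"
  obtain x where x: "a = ?d * x" by (meson gcd_dvd1 dvdE)
  obtain y where y: "b = ?d * y" by (meson gcd_dvd2 dvdE)
  have "x \<noteq> y" using x y assms(3) by auto
  moreover have "a \<noteq> 0" "b \<noteq> 0" using assms by auto
  moreover have "x \<noteq> 0" using x calculation by (metis mult_0_right)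
  moreover have "y \<noteq> 0" using y calculation by (metis mult_0_right)
  moreover have "x \<ge> 1" "y \<ge> 1" using calculation by auto
  ultimately have "x \<ge> 2 \<or> y \<ge> 2" by linarith
  then show ?thesis
  proof
    assume "x \<ge> 2" then have "2 * ?d \<le> a" using x by (metis mult.commute mult_le_mono2)
    then show ?thesis using assms by auto
  next
    assume "y \<ge> 2" then have "2 * ?d \<le> b" using y by (metis mult.commute mult_le_mono2)
    then show ?thesis using assms by auto
  qed
qed

theorem mainTheorem10:
  fixes n :: nat
  assumes "n \<ge> 2"
  shows "D_complete n \<longleftrightarrow>
    (\<forall>p::nat. prime p \<and> real p \<le> real n / 2 \<longrightarrow>
       p dvd n \<and> real (p ^ vacute p n) > real n / 2)"
proof
  assume C: "D_complete n"
  have G: "gcd a b dvd n" if "a \<in> {1..n}" "b \<in> {1..n}" "a \<noteq> b" for a b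
    using C that unfolding D_complete_def diophantine_adj_def by blast
  show "\<forall>p::nat. prime p \<and> real p \<le> real n / 2 \<longrightarrow>
       p dvd n \<and> real (p ^ vacute p n) > real n / 2"
  proof (intro allI impI conjI)
    fix p :: nat assume h: "prime p \<and> real p \<le> real n / 2"
    then have p1: "p \<ge> 2" "2 * p \<le> n" using prime_ge_2_nat by auto
    have "gcd p (2*p) dvd n" by (rule G) (use p1 in auto)
    then show "p dvd n" by simp
    show "real (p ^ vacute p n) > real n / 2"
    proof (rule ccontr)
      let ?q = "p ^ vacute p n"
      assume "\<not> ?thesis"
      then have "real (2 * ?q) \<le> real n" by simp
      then have "2 * ?q \<le> n" by (simp only: of_nat_le_iff)
      moreover have "?q \<ge> 1" using p1 by simp
      ultimately have "gcd ?q (2 * ?q) dvd n" using p1 by (intro G) auto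
      then have "p ^ (multiplicity p n + 1) dvd n" by (simp add: vacute_def)
      then have "multiplicity p n + 1 \<le> multiplicity p n"
        using assms h by (intro multiplicity_geI) auto
      then show False by simp
    qed
  qed
next
  assume H: "\<forall>p::nat. prime p \<and> real p \<le> real n / 2 \<longrightarrow>
       p dvd n \<and> real (p ^ vacute p n) > real n / 2"
  show "D_complete n" unfolding D_complete_def diophantine_adj_def
  proof (intro ballI impI conjI)
    fix a b assume ab: "a \<in> {1..n}" "b \<in> {1..n}" "a \<noteq> b"
    then show "a \<in> {1..n}" "b \<in> {1..n}" "a \<noteq> b" by auto
    let ?d = "gcd a b"
    have d2: "2 * ?d \<le> n" using gcd_double_le[OF ab] .
    have d0: "?d \<noteq> 0" using ab by auto
    show "?d dvd n"
    proof (rule multiplicity_le_imp_dvd[OF d0])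
      fix p :: nat assume p: "prime p"
      show "multiplicity p ?d \<le> multiplicity p n"
      proof (cases "multiplicity p ?d = 0")
        case True then show ?thesis by simp
      next
        case False
        let ?e = "multiplicity p ?d"
        have "p ^ ?e dvd ?d" by (rule multiplicity_dvd)
        then have pe: "p ^ ?e \<le> ?d" using d0 by (intro dvd_imp_le) auto
        have "p \<le> p ^ ?e" using False p prime_gt_0_nat
          by (metis One_nat_def Suc_leI neq0_conv power_increasing power_one_right)
        then have "real p \<le> real n / 2" using pe d2 by linarith
        then have hp: "real (p ^ vacute p n) > real n / 2" using H p by blast
        have "real (p ^ ?e) \<le> real n / 2" using pe d2 by linarith
        then have "p ^ ?e < p ^ (multiplicity p n + 1)" using hp
          unfolding vacute_def by linarith
        then have "?e < multiplicity p n + 1" using p prime_gt_1_nat power_less_imp_less_exp by blast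
        then show ?thesis by simp
      qed
    qed
  qed
qed

end
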